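(* Consider the decoding setting fixed in the context. Let $t_j=|\mathcal{A}_j|$ and run the index-collision-resolution procedure with $\hat t_j=t_j$. Assume that (no $E_1$) $t_j\le T$, and that (no $E_2$) whenever, during this run, the decoder $D$ of $\mathcal{C}$ is applied to a vector of the form $[\mathbf{c}+\tilde{\mathbf{z}}_j/2^{\ell}]\bmod 2$ with $\mathbf{c}\in\mathcal{C}$ and $\ell$ a nonnegative integer, it outputs $\mathbf{c}$. Then, for every iteration $\ell\ge1$ performed by the procedure: (i) $\hat t^{(\ell)}_j=|\mathcal{A}^{(\ell)}_j|$; (ii) $\mathbf{y}^{(\ell)}_j=\sum_{i\in\mathcal{A}^{(\ell)}_j}\mathbf{x}_{i,j}+\mathbf{z}_j/2^{\ell-1}$; (iii) the decoding $\Phi(\mathbf{y}^{(\ell)}_j,\hat t^{(\ell)}_j)$ of the $\ell$-th iteration is successful; (iv) $\mathcal{L}^{(\ell)}=\mathcal{U}(\mathcal{A}^{(\ell)}_j\setminus\mathcal{B}^{(\ell)}_j)$. Moreover, for the final iteration $\tau$, $\mathcal{B}^{(\tau)}_j=\emptyset$, and hence $\mathcal{L}^{(\tau)}=\mathcal{U}(\mathcal{A}^{(\tau)}_j)$.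
   Context: Codes. Let $\mathbf{H}\in\{0,1\}^{m_p\times n_p}$ be a parity-check matrix of a binary linear code $\mathcal{C}_{\mathrm{aux}}$ of length $n_p$ with minimum Hamming distance $d$, and let $T=\lfloor (d-1)/2\rfloor$; denote the $u$-th column of $\mathbf{H}$ by $\mathbf{h}_u$. Let $\mathbf{G}\in\{0,1\}^{m_p\times n}$ be a generator matrix (full row rank) of a binary linear code $\mathcal{C}$ of length $n$ and dimension $m_p$. For $u\in\{1,\dots,n_p\}$ put $\mathbf{c}(u)=\mathbf{h}_u^T\mathbf{G}\bmod 2$ and define $\mathbf{x}(u)\in\mathbb{R}^n$ componentwise by $\mathbf{x}(u)_k=2a(\mathbf{c}(u)_k-1/2)$, where $a>0$ is fixed. Channel. In sub-block $j$, a finite set $\mathcal{A}_j$ of users transmits; user $i\in\mathcal{A}_j$ chose $u_i\in\{1,\dots,n_p\}$ and sends $\mathbf{x}_{i,j}=\mathbf{x}(u_i)$. The received vector is $\mathbf{y}_j=\sum_{i\in\mathcal{A}_j}\mathbf{x}(u_i)+\mathbf{z}_j$ with noise $\mathbf{z}_j\in\mathbb{R}^n$; put $\tilde{\mathbf{z}}_j=\mathbf{z}_j/(2a)$. "$\bmod 2$" on real vectors is componentwise reduction into $[0,2)$. Basic decoder $\Phi$. For $\mathbf{y}\in\mathbb{R}^n$ and integer $\hat t\ge0$: form $\tilde{\mathbf{y}}=[\mathbf{y}/(2a)+\hat t/2]\bmod 2$; apply a decoder $D$ for $\mathcal{C}$, obtaining $\tilde{\mathbf{c}}\in\mathcal{C}$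 (or a flagged error); recover the unique $\tilde{\mathbf{h}}$ with $\tilde{\mathbf{h}}^T\mathbf{G}=\tilde{\mathbf{c}}\bmod 2$; apply the bounded-distance syndrome decoder of $\mathcal{C}_{\mathrm{aux}}$, which returns the unique $S\subseteq\{1,\dots,n_p\}$ with $|S|\le T$ and $\sum_{u\in S}\mathbf{h}_u=\tilde{\mathbf{h}}\bmod 2$ if it exists and flags an error otherwise. $\Phi(\mathbf{y},\hat t)$ is the returned set (or $\emptyset$ with a flagged error). ICR procedure for an estimate $\hat t_j$: $\mathbf{y}^{(1)}_j=\mathbf{y}_j$, $\hat t^{(1)}_j=\hat t_j$, $\mathcal{L}^{(1)}=\Phi(\mathbf{y}^{(1)}_j,\hat t^{(1)}_j)$. For $\ell\ge1$: if $|\mathcal{L}^{(\ell)}|=\hat t^{(\ell)}_j$, stop with $\tau=\ell$ and return $\mathcal{L}^{(1)},\dots,\mathcal{L}^{(\tau)}$; if $|\mathcal{L}^{(\ell)}|>\hat t^{(\ell)}_j$, return an error; if $|\mathcal{L}^{(\ell)}|<\hat t^{(\ell)}_j$, set $\hat t^{(\ell+1)}_j=(\hat t^{(\ell)}_j-|\mathcal{L}^{(\ell)}|)/2$ (error if not an integer), $\mathbf{y}^{(\ell+1)}_j=(\mathbf{y}^{(\ell)}_j-\sum_{u\in\mathcal{L}^{(\ell)}}\mathbf{x}(u))/2$, $\mathcal{L}^{(\ell+1)}=\Phi(\mathbf{y}^{(\ell+1)}_j,\hat t^{(\ell+1)}_j)$, and continue. Auxiliary sets. For $u\in\{1,\dots,n_p\}$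 let $\mathcal{A}^{(1)}_j(u)=\{i\in\mathcal{A}_j:u_i=u\}$. For $\ell\ge1$, let $\mathcal{B}^{(\ell)}_j(u)\subseteq\mathcal{A}^{(\ell)}_j(u)$ be an (arbitrary) subset with $|\mathcal{B}^{(\ell)}_j(u)|=2\lfloor|\mathcal{A}^{(\ell)}_j(u)|/2\rfloor$, and $\mathcal{A}^{(\ell+1)}_j(u)\subseteq\mathcal{B}^{(\ell)}_j(u)$ an (arbitrary) subset with $|\mathcal{A}^{(\ell+1)}_j(u)|=|\mathcal{B}^{(\ell)}_j(u)|/2$. Put $\mathcal{A}^{(\ell)}_j=\bigcup_u\mathcal{A}^{(\ell)}_j(u)$, $\mathcal{B}^{(\ell)}_j=\bigcup_u\mathcal{B}^{(\ell)}_j(u)$. For a set $\mathcal{S}$ of users, $\mathcal{U}(\mathcal{S})=\{u_i:i\in\mathcal{S}\}$. *)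

theory Defs
  imports "HOL-Analysis.Analysis" "HOL-Library.Z2"
begin

text \<open>Binary vectors are vectors over the field bit (GF(2)); length-n real vectors are real^'n.
 Index types: 'm (rows, size m_p), 'n (code length n), 'p (columns of H, size n_p).\<close>

definition bit_to_real :: "bit \<Rightarrow> real" where
  "bit_to_real b = (if b = 1 then 1 else 0)"

definition rmod2 :: "real \<Rightarrow> real" where
  "rmod2 r = r - 2 * of_int \<lfloor>r / 2\<rfloor>"

definition vmod2 :: "real ^ 'n \<Rightarrow> real ^ 'n" where
  "vmod2 v = (\<chi> k. rmod2 (v $ k))"

definition gen_code :: "bit ^ 'n ^ 'm \<Rightarrow> (bit ^ 'n) set" where
  "gen_code G = {h v* G | h. True}"

definition aux_code :: "bit ^ 'p ^ 'm \<Rightarrow> (bit ^ 'p) set" where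
  "aux_code H = {v. H *v v = 0}"

definition hamming_dist :: "bit ^ 'p \<Rightarrow> bit ^ 'p \<Rightarrow> nat" where
  "hamming_dist v w = card {u. v $ u \<noteq> w $ u}"

definition min_dist :: "bit ^ 'p ^ 'm \<Rightarrow> nat" where
  "min_dist H = Min {hamming_dist v w | v w. v \<in> aux_code H \<and> w \<in> aux_code H \<and> v \<noteq> w}"

definition Tcap :: "bit ^ 'p ^ 'm \<Rightarrow> nat" where
  "Tcap H = (min_dist H - 1) div 2"

definition cw :: "bit ^ 'p ^ 'm \<Rightarrow> bit ^ 'n ^ 'm \<Rightarrow> 'p \<Rightarrow> bit ^ 'n" where
  "cw H G u = column u H v* G"

definition xsig :: "real \<Rightarrow> bit ^ 'p ^ 'm \<Rightarrow> bit ^ 'n ^ 'm \<Rightarrow> 'p \<Rightarrow> real ^ 'n" where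
  "xsig a H G u = (\<chi> k. 2 * a * (bit_to_real (cw H G u $ k) - 1 / 2))"

definition phi_input :: "real \<Rightarrow> real ^ 'n \<Rightarrow> nat \<Rightarrow> real ^ 'n" where
  "phi_input a y t = vmod2 (\<chi> k. y $ k / (2 * a) + real t / 2)"

definition syn_dec :: "bit ^ 'p ^ 'm \<Rightarrow> bit ^ 'm \<Rightarrow> ('p set) option" where
  "syn_dec H h =
     (if \<exists>!S. card S \<le> Tcap H \<and> (\<Sum>u\<in>S. column u H) = h
      then Some (THE S. card S \<le> Tcap H \<and> (\<Sum>u\<in>S. column u H) = h) else None)"

text \<open>Basic decoder Phi; None means a flagged error.\<close>
definition Phi :: "real \<Rightarrow> bit ^ 'p ^ 'm \<Rightarrow> bit ^ 'n ^ 'm \<Rightarrow> (real ^ 'n \<Rightarrow> (bit ^ 'n) option)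
                   \<Rightarrow> real ^ 'n \<Rightarrow> nat \<Rightarrow> ('p set) option" where
  "Phi a H G D y t =
     (case D (phi_input a y t) of
        None \<Rightarrow> None
      | Some c \<Rightarrow> (if \<exists>!h. h v* G = c then syn_dec H (THE h. h v* G = c) else None))"

definition Lres :: "real \<Rightarrow> bit ^ 'p ^ 'm \<Rightarrow> bit ^ 'n ^ 'm \<Rightarrow> (real ^ 'n \<Rightarrow> (bit ^ 'n) option)
                   \<Rightarrow> real ^ 'n \<Rightarrow> nat \<Rightarrow> 'p set" where
  "Lres a H G D y t = (case Phi a H G D y t of None \<Rightarrow> {} | Some S \<Rightarrow> S)"

text \<open>ICR procedure: icr a H G D y0 t0 k = Some (y^(k+1), t^(k+1)) if iteration k+1 is
 performed, None otherwise (procedure stopped or returned an error earlier).\<close>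
primrec icr :: "real \<Rightarrow> bit ^ 'p ^ 'm \<Rightarrow> bit ^ 'n ^ 'm \<Rightarrow> (real ^ 'n \<Rightarrow> (bit ^ 'n) option)
                 \<Rightarrow> real ^ 'n \<Rightarrow> nat \<Rightarrow> nat \<Rightarrow> ((real ^ 'n) \<times> nat) option" where
  "icr a H G D y0 t0 0 = Some (y0, t0)"
| "icr a H G D y0 t0 (Suc k) =
     (case icr a H G D y0 t0 k of
        None \<Rightarrow> None
      | Some (y, t) \<Rightarrow>
          (let L = Lres a H G D y t in
           if card L < t \<and> even (t - card L)
           then Some ((1/2) *\<^sub>R (y - (\<Sum>u\<in>L. xsig a H G u)), (t - card L) div 2)
           else None))"

definition iter_state where
  "iter_state a H G D y0 t0 l = icr a H G D y0 t0 (l - 1)"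

end

theory Submission imports Defs begin


lemma bit_add_self: "(x::bit) + x = 0"
  by (cases x) simp_all

lemma vec_bit_add_self: "(v::bit^'m) + v = 0"
  by (simp add: vec_eq_iff bit_add_self)

lemma sum_const_bitvec:
  assumes "finite X" shows "(\<Sum>i\<in>X. (v::bit^'m)) = (if even (card X) then 0 else v)"
  using assms
proof (induction X rule: finite_induct)
  case empty then show ?case by simp
next
  case (insert x F)
  then show ?case by (auto simp del: sum_constant simp: vec_bit_add_self)
qed

lemma vm_sum: "(\<Sum>i\<in>X. f i) v* G = (\<Sum>i\<in>X. f i v* G)"
proof (cases "finite X")
  case True then show ?thesis
    by (induction X rule: finite_induct) (simp_all add: vector_matrix_left_distrib)
qed simp

lemma rmod2_shift: "rmod2 (r + 2 * of_int m) = rmod2 r"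
proof -
  have "\<lfloor>(r + 2 * of_int m) / 2\<rfloor> = \<lfloor>r/2\<rfloor> + m"
    by (simp add: add_divide_distrib)
  then show ?thesis unfolding rmod2_def by simp
qed

lemma bit_to_real_add: "\<exists>m::int. bit_to_real x + bit_to_real y = bit_to_real (x + y) + 2 * of_int m"
  by (cases x; cases y) (auto simp: bit_to_real_def intro: exI[of _ 0] exI[of _ 1])

lemma bit_sum_parity:
  assumes "finite X"
  shows "\<exists>m::int. (\<Sum>i\<in>X. bit_to_real (f i)) = bit_to_real (\<Sum>i\<in>X. f i) + 2 * of_int m"
  using assms
proof (induction X rule: finite_induct)
  case empty then show ?case by (auto simp: bit_to_real_def intro: exI[of _ 0])
next
  case (insert x F)
  then obtain m where m: "(\<Sum>i\<in>F. bit_to_real (f i)) = bit_to_real (\<Sum>i\<in>F. f i) + 2 * of_int m" by blast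
  obtain m' where m': "bit_to_real (f x) + bit_to_real (\<Sum>i\<in>F. f i) = bit_to_real (f x + (\<Sum>i\<in>F. f i)) + 2 * of_int m'"
    using bit_to_real_add by blast
  have "(\<Sum>i\<in>insert x F. bit_to_real (f i)) = bit_to_real (sum f (insert x F)) + 2 * real_of_int (m + m')"
    using insert m m' by simp
  then show ?case by blast
qed

lemma sum_partition:
  fixes P :: "'p::finite \<Rightarrow> 'i set" and g :: "'p \<Rightarrow> 'a::comm_monoid_add"
  assumes "\<And>u i. i \<in> P u \<Longrightarrow> uc i = u" "\<And>u. finite (P u)"
  shows "(\<Sum>i\<in>(\<Union>u. P u). g (uc i)) = (\<Sum>u\<in>UNIV. \<Sum>i\<in>P u. g u)"
proof -
  have "(\<Sum>i\<in>(\<Union>u. P u). g (uc i)) = (\<Sum>u\<in>UNIV. \<Sum>i\<in>P u. g (uc i))"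
    by (rule sum.UNION_disjoint) (use assms in \<open>auto; metis\<close>)+
  also have "\<dots> = (\<Sum>u\<in>UNIV. \<Sum>i\<in>P u. g u)"
    by (rule sum.cong[OF refl], rule sum.cong) (use assms in auto)
  finally show ?thesis .
qed

lemma card_partition:
  fixes P :: "'p::finite \<Rightarrow> 'i set"
  assumes "\<And>u i. i \<in> P u \<Longrightarrow> uc i = u" "\<And>u. finite (P u)"
  shows "card (\<Union>u. P u) = (\<Sum>u\<in>UNIV. card (P u))"
  by (rule card_UN_disjoint) (use assms in \<open>auto; metis\<close>)+




lemma mv_ind: "(H *v (\<chi> j. if j \<in> S then 1 else 0)) = (\<Sum>u\<in>S. column u (H::bit^'p::finite^'m))"
proof -
  have "\<And>i. (\<Sum>j\<in>UNIV. H $ i $ j * (if j \<in> S then 1 else 0)) = (\<Sum>j\<in>UNIV. if j \<in> S then H $ i $ j else 0)"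
    by (rule sum.cong) auto
  moreover have "\<And>i. (\<Sum>j\<in>UNIV. if j \<in> S then H $ i $ j else 0) = (\<Sum>j\<in>S. H $ i $ j)"
    using sum.inter_restrict[of UNIV "\<lambda>j. H $ i $ j" S for i, symmetric] by simp
  ultimately show ?thesis
    by (simp add: vec_eq_iff matrix_vector_mult_def column_def del: sum_mult_of_bool_eq)
qed

lemma syn_unique:
  fixes H :: "bit ^ 'p::finite ^ 'm::finite"
  assumes "card S \<le> Tcap H" "card S' \<le> Tcap H"
    and eq: "(\<Sum>u\<in>S. column u H) = (\<Sum>u\<in>S'. column u H)"
  shows "S = S'"
proof (rule ccontr)
  assume ne: "S \<noteq> S'"
  define v :: "bit^'p" where "v = (\<chi> j. if j \<in> S then 1 else 0) + (\<chi> j. if j \<in> S' then 1 else 0)"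
  have "H *v v = (\<Sum>u\<in>S. column u H) + (\<Sum>u\<in>S'. column u H)"
    unfolding v_def matrix_vector_right_distrib mv_ind ..
  also have "\<dots> = 0" unfolding eq by (simp add: vec_eq_iff)
  finally have vC: "v \<in> aux_code H" by (simp add: aux_code_def)
  have zC: "0 \<in> aux_code H" by (simp add: aux_code_def)
  have setv: "{u. v $ u \<noteq> 0 $ u} = {u. (u \<in> S) \<noteq> (u \<in> S')}"
    by (auto simp: v_def)
  have "v \<noteq> 0"
  proof
    assume "v = 0"
    then have "{u. (u \<in> S) \<noteq> (u \<in> S')} = {}" using setv by simp
    then show False using ne by auto
  qed
  then obtain u0 where "v $ u0 \<noteq> 0 $ u0" by (metis vec_eq_iff)
  then have h1: "hamming_dist v 0 \<ge> 1"
    unfolding hamming_dist_def by (metis (mono_tags) One_nat_def Suc_leI card_gt_0_iff empty_iff finite mem_Collect_eq)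
  have "hamming_dist v 0 \<le> card (S \<union> S')"
    unfolding hamming_dist_def setv by (rule card_mono) auto
  also have "\<dots> \<le> card S + card S'" by (rule card_Un_le)
  finally have h2: "hamming_dist v 0 \<le> 2 * Tcap H" using assms by simp
  have "min_dist H \<le> hamming_dist v 0"
    unfolding min_dist_def
  proof (rule Min_le)
    show "finite {hamming_dist v w |v w. v \<in> aux_code H \<and> w \<in> aux_code H \<and> v \<noteq> w}"
    proof (rule finite_subset)
      show "{hamming_dist v w |v w. v \<in> aux_code H \<and> w \<in> aux_code H \<and> v \<noteq> w} \<subseteq> {..CARD('p)}"
        by (auto simp: hamming_dist_def card_mono)
    qed simp
    show "hamming_dist v 0 \<in> {hamming_dist v w |v w. v \<in> aux_code H \<and> w \<in> aux_code H \<and> v \<noteq> w}"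
      using vC zC \<open>v \<noteq> 0\<close> by blast
  qed
  then show False using h1 h2 unfolding Tcap_def by linarith
qed




theorem lemma1:
  fixes H :: "bit ^ 'p::finite ^ 'm::finite"
    and G :: "bit ^ 'n::finite ^ 'm"
    and D :: "real ^ 'n \<Rightarrow> (bit ^ 'n) option"
    and a :: real
    and Aj :: "'i set"
    and uc :: "'i \<Rightarrow> 'p"
    and z :: "real ^ 'n"
    and AA :: "nat \<Rightarrow> 'p \<Rightarrow> 'i set"
    and BB :: "nat \<Rightarrow> 'p \<Rightarrow> 'i set"
  assumes a_pos: "a > 0"
    and G_full_row_rank: "inj (\<lambda>h. h v* G)"
    and D_codewords: "\<And>v c. D v = Some c \<Longrightarrow> c \<in> gen_code G"
    and A_fin: "finite Aj"
    and AA1: "\<And>u. AA 1 u = {i \<in> Aj. uc i = u}"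
    and BB_sub: "\<And>l u. l \<ge> 1 \<Longrightarrow> BB l u \<subseteq> AA l u"
    and BB_card: "\<And>l u. l \<ge> 1 \<Longrightarrow> card (BB l u) = 2 * (card (AA l u) div 2)"
    and AA_sub: "\<And>l u. l \<ge> 1 \<Longrightarrow> AA (Suc l) u \<subseteq> BB l u"
    and AA_card: "\<And>l u. l \<ge> 1 \<Longrightarrow> card (AA (Suc l) u) = card (BB l u) div 2"
    and noE1: "card Aj \<le> Tcap H"
    and noE2: "\<And>l y t c k. l \<ge> 1 \<Longrightarrow>
        iter_state a H G D ((\<Sum>i\<in>Aj. xsig a H G (uc i)) + z) (card Aj) l = Some (y, t) \<Longrightarrow>
        c \<in> gen_code G \<Longrightarrow>
        phi_input a y t = vmod2 (\<chi> q. bit_to_real (c $ q) + (z $ q / (2 * a)) / 2 ^ k) \<Longrightarrow>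
        D (phi_input a y t) = Some c"
  shows "(\<forall>l y t. l \<ge> 1 \<longrightarrow>
            iter_state a H G D ((\<Sum>i\<in>Aj. xsig a H G (uc i)) + z) (card Aj) l = Some (y, t) \<longrightarrow>
              t = card (\<Union>u. AA l u)
            \<and> y = (\<Sum>i\<in>(\<Union>u. AA l u). xsig a H G (uc i)) + (1 / 2 ^ (l - 1)) *\<^sub>R z
            \<and> Phi a H G D y t \<noteq> None
            \<and> Phi a H G D y t = Some (uc ` ((\<Union>u. AA l u) - (\<Union>u. BB l u))))
       \<and> (\<forall>tau y t. tau \<ge> 1 \<longrightarrow>
            iter_state a H G D ((\<Sum>i\<in>Aj. xsig a H G (uc i)) + z) (card Aj) tau = Some (y, t) \<longrightarrow>
            card (Lres a H G D y t) = t \<longrightarrow>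
              (\<Union>u. BB tau u) = {}
            \<and> Lres a H G D y t = uc ` (\<Union>u. AA tau u))"
  proof -
  define Y0 where "Y0 = (\<Sum>i\<in>Aj. xsig a H G (uc i)) + z"
  define st where "st l = iter_state a H G D Y0 (card Aj) l" for l
  define A where "A l = (\<Union>u. AA l u)" for l
  define B where "B l = (\<Union>u. BB l u)" for l
  define S0 where "S0 l = {u. odd (card (AA l u))}" for l
  define xs where "xs u = xsig a H G u" for u
  have AAsub: "AA l u \<subseteq> {i \<in> Aj. uc i = u}" if "l \<ge> 1" for l u
    using that
  proof (induction l rule: nat_induct_at_least)
    case base then show ?case using AA1 by simp
  next
    case (Suc n) then show ?case using AA_sub[of n u] BB_sub[of n u] by blast
  qed
  have AAuc: "uc i = u" if "l \<ge> 1" "i \<in> AA l u" for l u i using AAsub[OF that(1)] that(2) by blast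
  have AAfin: "finite (AA l u)" if "l \<ge> 1" for l u using AAsub[OF that] A_fin finite_subset by fastforce
  have BBfin: "finite (BB l u)" if "l \<ge> 1" for l u using BB_sub[OF that] AAfin[OF that] finite_subset by blast
  have Asub: "A l \<subseteq> Aj" if "l \<ge> 1" for l using AAsub[OF that] unfolding A_def by blast
  have cardA: "card (A l) = (\<Sum>u\<in>UNIV. card (AA l u))" if "l \<ge> 1" for l
    unfolding A_def by (rule card_partition[where uc=uc]) (use AAuc AAfin that in auto)
  have cardAB: "card (AA l u - BB l u) = card (AA l u) mod 2" if "l \<ge> 1" for l u
    using card_Diff_subset[OF BBfin[OF that] BB_sub[OF that]] BB_card[OF that] by (simp add: minus_mult_div_eq_mod)
  have S0eq: "uc ` (A l - B l) = S0 l" if "l \<ge> 1" for l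
  proof
    show "uc ` (A l - B l) \<subseteq> S0 l"
    proof
      fix u assume "u \<in> uc ` (A l - B l)"
      then obtain i where i: "i \<in> A l" "i \<notin> B l" "u = uc i" by blast
      then obtain v where "i \<in> AA l v" unfolding A_def by blast
      with AAuc[OF that] i have "i \<in> AA l u - BB l u" unfolding B_def by auto
      then have "card (AA l u - BB l u) \<noteq> 0" using AAfin[OF that] by (metis card_0_eq empty_iff finite_Diff)
      then show "u \<in> S0 l" unfolding S0_def using cardAB[OF that] by (simp add: odd_iff_mod_2_eq_one)
    qed
    show "S0 l \<subseteq> uc ` (A l - B l)"
    proof
      fix u assume "u \<in> S0 l"
      then have "card (AA l u - BB l u) \<noteq> 0" unfolding S0_def using cardAB[OF that] by (simp add: odd_iff_mod_2_eq_one)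
      then obtain i where i: "i \<in> AA l u" "i \<notin> BB l u" by (metis DiffE card.empty equals0I)
      have "i \<notin> B l"
      proof
        assume "i \<in> B l"
        then obtain v where "i \<in> BB l v" unfolding B_def by blast
        then have "i \<in> AA l v" using BB_sub[OF that] by blast
        then have "v = u" using AAuc[OF that] i(1) by metis
        then show False using i \<open>i \<in> BB l v\<close> by simp
      qed
      moreover have "i \<in> A l" using i unfolding A_def by blast
      moreover have "uc i = u" using AAuc[OF that i(1)] .
      ultimately show "u \<in> uc ` (A l - B l)" by blast
    qed
  qed
  have cardS0: "card (S0 l) = (\<Sum>u\<in>UNIV. card (AA l u) mod 2)" for l
  proof -
    have "card (S0 l) = (\<Sum>u\<in>UNIV. if u \<in> S0 l then 1 else 0)"
      using sum.inter_restrict[of UNIV "\<lambda>_. 1::nat" "S0 l"] by simp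
    also have "\<dots> = (\<Sum>u\<in>UNIV. card (AA l u) mod 2)"
      by (rule sum.cong) (auto simp: S0_def odd_iff_mod_2_eq_one)
    finally show ?thesis .
  qed
  have S0le: "card (S0 l) \<le> card Aj" if "l \<ge> 1" for l
  proof -
    have "card (S0 l) \<le> card (A l - B l)" using S0eq[OF that] card_image_le
      by (metis A_fin Asub[OF that] finite_Diff finite_subset)
    also have "\<dots> \<le> card Aj" using Asub[OF that] A_fin by (meson Diff_subset card_mono order_trans)
    finally show ?thesis .
  qed
  have sumx: "(\<Sum>i\<in>A l. f (uc i)) = (\<Sum>u\<in>UNIV. \<Sum>i\<in>AA l u. f u)" if "l \<ge> 1" for l and f :: "'p \<Rightarrow> 'b::comm_monoid_add"
    unfolding A_def by (rule sum_partition) (use AAuc AAfin that in auto)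
  have PhiOK: "Phi a H G D y t = Some (S0 l)"
    if l1: "l \<ge> 1" and stl: "st l = Some (y, t)" and tA: "t = card (A l)"
      and yA: "y = (\<Sum>i\<in>A l. xs (uc i)) + (1 / 2 ^ (l - 1)) *\<^sub>R z" for l y t
  proof -
    define c where "c = (\<Sum>i\<in>A l. cw H G (uc i))"
    define hc where "hc = (\<Sum>i\<in>A l. column (uc i) H)"
    have chc: "c = hc v* G" unfolding c_def hc_def vm_sum cw_def ..
    have cC: "c \<in> gen_code G" unfolding chc gen_code_def by blast
    have finA: "finite (A l)" using Asub[OF l1] A_fin finite_subset by blast
    have pin: "phi_input a y t = vmod2 (\<chi> q. bit_to_real (c $ q) + (z $ q / (2 * a)) / 2 ^ (l - 1))"
    proof -
      have "rmod2 (y $ q / (2 * a) + real t / 2) = rmod2 (bit_to_real (c $ q) + (z $ q / (2 * a)) / 2 ^ (l - 1))" for q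
      proof -
        have yq: "y $ q = (\<Sum>i\<in>A l. 2 * a * (bit_to_real (cw H G (uc i) $ q) - 1 / 2)) + z $ q / 2 ^ (l - 1)"
          unfolding yA xs_def xsig_def by simp
        have "(\<Sum>i\<in>A l. 2 * a * (bit_to_real (cw H G (uc i) $ q) - 1 / 2))
              = 2 * a * (\<Sum>i\<in>A l. bit_to_real (cw H G (uc i) $ q)) - a * real (card (A l))"
          by (simp add: sum_distrib_left[symmetric] sum_subtractf algebra_simps)
        then have yq2: "y $ q = 2 * a * (\<Sum>i\<in>A l. bit_to_real (cw H G (uc i) $ q)) - a * real (card (A l)) + z $ q / 2 ^ (l - 1)"
          unfolding yq by simp
        have gen: "Y / (2 * a) + N / 2 = S + (Z / (2 * a)) / P" if "Y = 2 * a * S - a * N + Z / P" "P > 0" for Y N S Z P :: real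
          using that a_pos apply (simp add: field_simps)
          apply (drule arg_cong[where f="\<lambda>x. x * (2 * a)"])
          apply (simp add: algebra_simps)
          done
        have "y $ q / (2 * a) + real t / 2 = (\<Sum>i\<in>A l. bit_to_real (cw H G (uc i) $ q)) + (z $ q / (2 * a)) / 2 ^ (l - 1)"
          unfolding tA by (rule gen[OF yq2]) simp
        moreover obtain m where "(\<Sum>i\<in>A l. bit_to_real (cw H G (uc i) $ q)) = bit_to_real (c $ q) + 2 * of_int m"
          using bit_sum_parity[OF finA, of "\<lambda>i. cw H G (uc i) $ q"] unfolding c_def by auto
        ultimately show ?thesis using rmod2_shift[of "bit_to_real (c $ q) + (z $ q / (2 * a)) / 2 ^ (l - 1)" m]
          by (simp add: algebra_simps)
      qed
      then show ?thesis unfolding phi_input_def vmod2_def by simp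
    qed
    have Dc: "D (phi_input a y t) = Some c"
      using noE2[OF l1 _ cC pin] stl unfolding st_def Y0_def by simp
    have ex1: "\<exists>!h. h v* G = c" using chc G_full_row_rank by (metis injD)
    have theh: "(THE h. h v* G = c) = hc" using ex1 chc by auto
    have hcS0: "hc = (\<Sum>u\<in>S0 l. column u H)"
    proof -
      have "hc = (\<Sum>u\<in>UNIV. \<Sum>i\<in>AA l u. column u H)" unfolding hc_def by (rule sumx[OF l1])
      also have "\<dots> = (\<Sum>u\<in>UNIV. if u \<in> S0 l then column u H else 0)"
        by (rule sum.cong) (auto simp: sum_const_bitvec[OF AAfin[OF l1]] S0_def simp del: sum_constant)
      also have "\<dots> = (\<Sum>u\<in>S0 l. column u H)"
        using sum.inter_restrict[of UNIV "\<lambda>u. column u H" "S0 l"] by simp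
      finally show ?thesis .
    qed
    have S0T: "card (S0 l) \<le> Tcap H" using S0le[OF l1] noE1 by linarith
    have sd: "syn_dec H hc = Some (S0 l)"
    proof -
      have ex: "\<exists>!S. card S \<le> Tcap H \<and> (\<Sum>u\<in>S. column u H) = hc"
        using S0T hcS0 syn_unique by metis
      then have "(THE S. card S \<le> Tcap H \<and> (\<Sum>u\<in>S. column u H) = hc) = S0 l"
        using S0T hcS0 by (metis (mono_tags, lifting) the1_equality)
      then show ?thesis unfolding syn_dec_def using ex by simp
    qed
    show ?thesis unfolding Phi_def using Dc ex1 theh sd by simp
  qed
  have LresOK: "Lres a H G D y t = S0 l"
    if "l \<ge> 1" "st l = Some (y, t)" "t = card (A l)"
      "y = (\<Sum>i\<in>A l. xs (uc i)) + (1 / 2 ^ (l - 1)) *\<^sub>R z" for l y t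
    using PhiOK[OF that] unfolding Lres_def by simp
  have inv: "\<forall>y t. st l = Some (y, t) \<longrightarrow> t = card (A l) \<and> y = (\<Sum>i\<in>A l. xs (uc i)) + (1 / 2 ^ (l - 1)) *\<^sub>R z"
    if "l \<ge> 1" for l
    using that
  proof (induction l rule: nat_induct_at_least)
    case base
    have "A 1 = Aj" unfolding A_def using AA1 by auto
    then show ?case unfolding st_def iter_state_def Y0_def xs_def by simp
  next
    case (Suc l)
    show ?case
    proof (intro allI impI)
      fix y' t' assume st': "st (Suc l) = Some (y', t')"
      have stS: "st (Suc l) = icr a H G D Y0 (card Aj) (Suc (l - 1))"
        unfolding st_def iter_state_def using Suc.hyps by simp
      obtain y t where stl: "st l = Some (y, t)"
      proof (cases "st l")
        case None
        then have "st (Suc l) = None" unfolding stS by (simp add: st_def iter_state_def)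
        then show ?thesis using st' by simp
      qed auto
      have tA: "t = card (A l)" and yA: "y = (\<Sum>i\<in>A l. xs (uc i)) + (1 / 2 ^ (l - 1)) *\<^sub>R z"
        using Suc.IH stl by auto
      have L: "Lres a H G D y t = S0 l" by (rule LresOK[OF Suc.hyps stl tA yA])
      have icrl: "icr a H G D Y0 (card Aj) (l - 1) = Some (y, t)" using stl unfolding st_def iter_state_def .
      have cond: "card (S0 l) < t \<and> even (t - card (S0 l))"
        and y'eq: "y' = (1/2) *\<^sub>R (y - (\<Sum>u\<in>S0 l. xs u))"
        and t'eq: "t' = (t - card (S0 l)) div 2"
        using st' L unfolding stS icr.simps icrl by (auto simp: Let_def xs_def split: if_splits)
      define cc where "cc u = card (AA l u)" for u
      have cS: "card (AA (Suc l) u) = cc u div 2" for u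
        unfolding cc_def using AA_card[OF Suc.hyps] BB_card[OF Suc.hyps] by simp
      have l1': "Suc l \<ge> 1" by simp
      have tsum: "t = 2 * (\<Sum>u\<in>UNIV. cc u div 2) + card (S0 l)"
      proof -
        have "t = (\<Sum>u\<in>UNIV. 2 * (cc u div 2) + cc u mod 2)" unfolding tA cardA[OF Suc.hyps] cc_def by simp
        also have "\<dots> = 2 * (\<Sum>u\<in>UNIV. cc u div 2) + card (S0 l)"
          unfolding cardS0 cc_def sum.distrib sum_distrib_left ..
        finally show ?thesis .
      qed
      have "t' = card (A (Suc l))"
        unfolding t'eq cardA[OF l1'] cS using tsum by simp
      moreover have "y' = (\<Sum>i\<in>A (Suc l). xs (uc i)) + (1 / 2 ^ (Suc l - 1)) *\<^sub>R z"
      proof -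
        have s1: "(\<Sum>i\<in>A l. xs (uc i)) = (\<Sum>u\<in>UNIV. real (cc u) *\<^sub>R xs u)"
          unfolding sumx[OF Suc.hyps] cc_def by (simp del: sum_constant add: sum_constant_scaleR)
        have s2: "(\<Sum>i\<in>A (Suc l). xs (uc i)) = (\<Sum>u\<in>UNIV. real (cc u div 2) *\<^sub>R xs u)"
          unfolding sumx[OF l1'] using cS by (simp del: sum_constant add: sum_constant_scaleR)
        have s3: "(\<Sum>u\<in>S0 l. xs u) = (\<Sum>u\<in>UNIV. real (cc u mod 2) *\<^sub>R xs u)"
        proof -
          have "(\<Sum>u\<in>S0 l. xs u) = (\<Sum>u\<in>UNIV. if u \<in> S0 l then xs u else 0)"
            using sum.inter_restrict[of UNIV xs "S0 l"] by simp
          also have "\<dots> = (\<Sum>u\<in>UNIV. real (cc u mod 2) *\<^sub>R xs u)"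
            by (rule sum.cong) (auto simp: S0_def cc_def odd_iff_mod_2_eq_one)
          finally show ?thesis .
        qed
        have rr: "real (cc u) - real (cc u mod 2) = 2 * real (cc u div 2)" for u
        proof -
          have "cc u = 2 * (cc u div 2) + cc u mod 2" by simp
          then have "real (cc u) = 2 * real (cc u div 2) + real (cc u mod 2)" by (metis of_nat_add of_nat_mult of_nat_numeral)
          then show ?thesis by simp
        qed
        have "(\<Sum>i\<in>A l. xs (uc i)) - (\<Sum>u\<in>S0 l. xs u) = 2 *\<^sub>R (\<Sum>i\<in>A (Suc l). xs (uc i))"
          unfolding s1 s2 s3 sum_subtractf[symmetric] scaleR_sum_right
          by (rule sum.cong) (auto simp: scaleR_diff_left[symmetric] rr)
        moreover have "(1/2::real) * (1 / 2 ^ (l - 1)) = 1 / 2 ^ (Suc l - 1)"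
          using Suc.hyps by (cases l) auto
        ultimately show ?thesis unfolding y'eq yA by (simp add: algebra_simps)
      qed
      ultimately show "t' = card (A (Suc l)) \<and> y' = (\<Sum>i\<in>A (Suc l). xs (uc i)) + (1 / 2 ^ (Suc l - 1)) *\<^sub>R z" ..
    qed
  qed
  have part1: "\<forall>l y t. l \<ge> 1 \<longrightarrow> st l = Some (y, t) \<longrightarrow>
            t = card (A l) \<and> y = (\<Sum>i\<in>A l. xs (uc i)) + (1 / 2 ^ (l - 1)) *\<^sub>R z
            \<and> Phi a H G D y t \<noteq> None \<and> Phi a H G D y t = Some (uc ` (A l - B l))"
  proof (intro allI impI)
    fix l y t assume l1: "l \<ge> 1" and stl: "st l = Some (y, t)"
    then have tA: "t = card (A l)" and yA: "y = (\<Sum>i\<in>A l. xs (uc i)) + (1 / 2 ^ (l - 1)) *\<^sub>R z"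
      using inv by auto
    show "t = card (A l) \<and> y = (\<Sum>i\<in>A l. xs (uc i)) + (1 / 2 ^ (l - 1)) *\<^sub>R z
            \<and> Phi a H G D y t \<noteq> None \<and> Phi a H G D y t = Some (uc ` (A l - B l))"
      using tA yA PhiOK[OF l1 stl tA yA] S0eq[OF l1] by simp
  qed
  have part2: "\<forall>tau y t. tau \<ge> 1 \<longrightarrow> st tau = Some (y, t) \<longrightarrow> card (Lres a H G D y t) = t \<longrightarrow>
              B tau = {} \<and> Lres a H G D y t = uc ` A tau"
  proof (intro allI impI)
    fix l y t assume l1: "l \<ge> 1" and stl: "st l = Some (y, t)" and cL: "card (Lres a H G D y t) = t"
    then have tA: "t = card (A l)" and yA: "y = (\<Sum>i\<in>A l. xs (uc i)) + (1 / 2 ^ (l - 1)) *\<^sub>R z"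
      using inv by auto
    have L: "Lres a H G D y t = S0 l" by (rule LresOK[OF l1 stl tA yA])
    have eqs: "(\<Sum>u\<in>UNIV. card (AA l u) mod 2) = (\<Sum>u\<in>UNIV. card (AA l u))"
      using cL L tA cardS0 cardA[OF l1] by simp
    have "card (AA l u) mod 2 = card (AA l u)" for u
      by (rule sum_mono_inv[OF eqs]) auto
    then have "card (BB l u) = 0" for u using BB_card[OF l1, of u]
      by (metis div_less mod_less_divisor mult_0_right zero_less_numeral)
    then have "BB l u = {}" for u using BBfin[OF l1] by auto
    then have B0: "B l = {}" unfolding B_def by auto
    show "B l = {} \<and> Lres a H G D y t = uc ` A l" using B0 L S0eq[OF l1] by simp
  qed
  show ?thesis using part1 part2 unfolding st_def Y0_def A_def B_def xs_def by simp
qed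

end
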